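(* Let $\Sigma\in\mathbb C^{L_T\times L_T}$ be positive semidefinite and let $M\ge\mathrm{Rank}(\Sigma)$ be an integer. Then there exist unit-norm vectors $t_1,\dots,t_M\in\mathbb C^{L_T}$ and powers $p_1,\dots,p_M$ with $\Sigma=\sum_{m=1}^M p_mt_mt_m^\dagger$ and $p_m=\mathrm{Tr}(\Sigma)/M$ for all $m$; i.e. uniform power allocation over the streams of a link loses no optimality. *)

theory Defs
  imports "HOL-Analysis.Analysis"
begin

definition conj_transpose :: "complex^'n^'m \<Rightarrow> complex^'m^'n" where
  "conj_transpose A = (\<chi> i j. cnj (A $ j $ i))"

definition herm_form :: "complex^'n^'n \<Rightarrow> complex^'n \<Rightarrow> complex" where
  "herm_form A x = (\<Sum>i\<in>UNIV. cnj (x $ i) * (A *v x) $ i)"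

definition psd :: "complex^'n^'n \<Rightarrow> bool" where
  "psd A \<longleftrightarrow> conj_transpose A = A \<and>
     (\<forall>x. Im (herm_form A x) = 0 \<and> Re (herm_form A x) \<ge> 0)"

definition outer :: "complex^'n \<Rightarrow> complex^'n^'n" where
  "outer t = (\<chi> i j. t $ i * cnj (t $ j))"

end

theory Submission
  imports Defs
begin

lemma herm_form_double:
  "herm_form A x = (\<Sum>k\<in>UNIV. \<Sum>l\<in>UNIV. cnj (x$k) * A$k$l * x$l)"
  unfolding herm_form_def matrix_vector_mult_def
  by (simp add: sum_distrib_left mult.assoc)

definition bf :: "complex^'n^'n \<Rightarrow> complex^'n \<Rightarrow> complex^'n \<Rightarrow> complex" where
  "bf A x y = (\<Sum>k\<in>UNIV. \<Sum>l\<in>UNIV. cnj (x$k) * A$k$l * y$l)"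

lemma herm_bf: "herm_form A x = bf A x x"
  by (simp add: herm_form_double bf_def)

lemma bf_diff:
  "bf A (x - z) (x - z) = bf A x x - bf A x z - bf A z x + bf A z z"
  unfolding bf_def
  by (simp add: algebra_simps sum_subtractf sum.distrib)

lemma bf_axis_left: "bf A (axis i c) y = cnj c * (\<Sum>l\<in>UNIV. A$i$l * y$l)"
proof -
  have "\<And>k. (\<Sum>l\<in>UNIV. cnj (axis i c $ k) * A$k$l * y$l) =
     (if k = i then cnj c * (\<Sum>l\<in>UNIV. A$i$l * y$l) else 0)"
    by (simp add: axis_def sum_distrib_left mult.assoc)
  then show ?thesis unfolding bf_def by simp
qed

lemma bf_axis_right: "bf A x (axis i c) = (\<Sum>k\<in>UNIV. cnj (x$k) * A$k$i) * c"
  unfolding bf_def axis_def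
  by (simp add: sum_distrib_right mult.assoc if_distrib sum.delta cong: if_cong)

lemma herm_axis: "herm_form A (axis i c) = cnj c * A$i$i * c"
  unfolding herm_bf bf_axis_left by (simp add: axis_def if_distrib sum.delta cong: if_cong)

lemma psd_diag:
  assumes "psd S"
  shows "Im (S$i$i) = 0" "Re (S$i$i) \<ge> 0"
  using assms herm_axis[of S i 1] unfolding psd_def by (metis complex_cnj_one mult_1 mult_1_right)+

lemma psd_herm:
  assumes "psd S"
  shows "cnj (S$j$i) = S$i$j"
proof -
  have "conj_transpose S $ i $ j = S $ i $ j" using assms unfolding psd_def by simp
  then show ?thesis unfolding conj_transpose_def by simp
qed

lemma bf_axis_axis: "bf A (axis i a) (axis j b) = cnj a * A$i$j * b"
  unfolding bf_axis_left by (simp add: axis_def if_distrib sum.delta cong: if_cong)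

lemma psd_zero:
  assumes "psd S" and "\<And>i. S$i$i = 0"
  shows "S = 0"
proof -
  have "S$j$i = 0" for i j
  proof -
    define d where "d = cnj (S$j$i)"
    have q: "herm_form S (axis j 1 - axis i d) = - 2 * (S$j$i * cnj (S$j$i))"
      unfolding herm_bf bf_diff bf_axis_axis using assms(2) psd_herm[OF assms(1), of j i]
      apply (simp add: d_def algebra_simps) by (metis complex_cnj_cnj)
    have "Re (herm_form S (axis j 1 - axis i d)) \<ge> 0"
      using assms(1) unfolding psd_def by blast
    then have "Re (S$j$i * cnj (S$j$i)) \<le> 0" unfolding q by simp
    then have "(cmod (S$j$i))^2 \<le> 0"
      by (simp add: complex_mult_cnj cmod_power2)
    then show ?thesis by simp
  qed
  then show ?thesis by (simp add: vec_eq_iff)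
qed

lemma bf_diff_mat: "bf (A - B) x y = bf A x y - bf B x y"
  unfolding bf_def by (simp add: algebra_simps sum_subtractf)

lemma bf_outer: "bf (outer v) x y = (\<Sum>k\<in>UNIV. cnj (x$k) * v$k) * (\<Sum>l\<in>UNIV. cnj (v$l) * y$l)"
  unfolding bf_def outer_def by (simp add: sum_product mult.assoc)

lemma rank_drop:
  fixes S T :: "complex^'n^'n"
  assumes rows: "\<And>k. row k T \<in> vec.span (rows S)"
    and col: "\<And>k. T$k$i = 0" and d: "S$i$i \<noteq> 0"
  shows "rank T < rank S"
proof -
  have sub: "vec.span (rows T) \<subseteq> vec.span (rows S)"
    by (rule vec.span_minimal) (use rows in \<open>auto simp: rows_def vec.subspace_span\<close>)
  have ssp: "vec.subspace {x :: complex^'n. x$i = 0}"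
    unfolding vec.subspace_def by simp
  have "vec.span (rows T) \<subseteq> {x. x$i = 0}"
    by (rule vec.span_minimal) (use col ssp in \<open>auto simp: rows_def row_def\<close>)
  moreover have "row i S \<in> vec.span (rows S)"
    by (rule vec.span_base) (auto simp: rows_def)
  moreover have "row i S \<notin> {x. x$i = 0}" using d by (simp add: row_def)
  ultimately have "vec.span (rows T) \<subset> vec.span (rows S)" using sub by blast
  then show ?thesis unfolding row_rank_def_gen by (rule vec.dim_psubset)
qed

lemma psd_step:
  fixes S :: "complex^'n^'n"
  assumes psd: "psd S" and d: "S$i$i \<noteq> 0"
  shows "\<exists>v. psd (S - outer v) \<and> rank (S - outer v) < rank S"
proof -
  define a where "a = Re (S$i$i)"
  have Sii: "S$i$i = complex_of_real a" using psd_diag[OF psd, of i] a_def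
    by (simp add: complex_eq_iff)
  have "a \<noteq> 0" using d Sii by auto
  then have apos: "a > 0" using psd_diag[OF psd, of i] a_def by linarith
  define r where "r = complex_of_real (sqrt a)"
  have rr: "r * r = complex_of_real a" unfolding r_def
  proof -
    have "sqrt a * sqrt a = a" using apos by simp
    then show "complex_of_real (sqrt a) * complex_of_real (sqrt a) = complex_of_real a"
      by (metis of_real_mult)
  qed
  have r0: "r \<noteq> 0" using apos r_def by simp
  have cr: "cnj r = r" unfolding r_def by simp
  define v where "v = (\<chi> k. S$k$i / r)"
  have H: "\<And>k l. cnj (S$k$l) = S$l$k" using psd_herm[OF psd] by simp
  have ov: "outer v $ k $ l = S$k$i * S$i$l / complex_of_real a" for k l
    unfolding outer_def v_def using H[of l i] rr r0
    by (simp add: cr field_simps)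
  define T where "T = S - outer v"
  have Tkl: "T$k$l = S$k$l - S$k$i * S$i$l / complex_of_real a" for k l
    unfolding T_def by (simp add: ov)
  have herm: "conj_transpose T = T"
    unfolding conj_transpose_def
    by (simp add: vec_eq_iff Tkl H mult.commute)
  have form: "herm_form T x = herm_form S (x - axis i ((\<Sum>l\<in>UNIV. S$i$l * x$l) / complex_of_real a))" for x
  proof -
    define b where "b = (\<Sum>l\<in>UNIV. S$i$l * x$l)"
    have cb: "(\<Sum>k\<in>UNIV. cnj (x$k) * S$k$i) = cnj b"
      unfolding b_def by (simp add: H mult.commute)
    have s1: "(\<Sum>k\<in>UNIV. cnj (x$k) * v$k) = cnj b / r"
      unfolding v_def using cb by (simp add: sum_divide_distrib[symmetric] mult.assoc)
    have s2: "(\<Sum>l\<in>UNIV. cnj (v$l) * x$l) = b / r"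
      unfolding v_def b_def by (simp add: cr H sum_divide_distrib[symmetric])
    have "herm_form T x = bf S x x - cnj b / r * (b / r)"
      unfolding herm_bf T_def bf_diff_mat bf_outer s1 s2 ..
    also have "\<dots> = bf S x x - cnj b * b / complex_of_real a"
      using rr r0 by (simp add: field_simps)
    also have "\<dots> = herm_form S (x - axis i (b / complex_of_real a))"
    proof -
      define c where "c = b / complex_of_real a"
      have e1: "bf S x (axis i c) = cnj b * c" using bf_axis_right cb by metis
      have e2: "bf S (axis i c) x = cnj c * b" unfolding bf_axis_left b_def ..
      have e3: "bf S (axis i c) (axis i c) = cnj c * complex_of_real a * c"
        unfolding bf_axis_axis Sii ..
      show ?thesis unfolding c_def[symmetric] herm_bf bf_diff e1 e2 e3
        using apos by (simp add: c_def field_simps)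
    qed
    finally show ?thesis unfolding b_def .
  qed
  have "psd T" unfolding psd_def using herm form psd unfolding psd_def by simp
  moreover have "rank T < rank S"
  proof (rule rank_drop[OF _ _ d])
    show "T$k$i = 0" for k unfolding Tkl Sii using apos by simp
    show "row k T \<in> vec.span (rows S)" for k
    proof -
      have "row k T = row k S - (S$k$i / complex_of_real a) *s row i S"
        by (simp add: vec_eq_iff row_def Tkl)
      moreover have "row k S \<in> vec.span (rows S)" "row i S \<in> vec.span (rows S)"
        by (auto intro!: vec.span_base simp: rows_def)
      ultimately show ?thesis by (simp add: vec.span_diff vec.span_scale)
    qed
  qed
  ultimately show ?thesis unfolding T_def by blast
qed

lemma outer_zero [simp]: "outer 0 = 0"
  by (simp add: outer_def vec_eq_iff)

lemma psd_decomp: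
  fixes S :: "complex^'n^'n"
  shows "psd S \<Longrightarrow> rank S \<le> N \<Longrightarrow> \<exists>v. S = (\<Sum>k<N. outer (v k))"
proof (induction N arbitrary: S)
  case 0
  show ?case
  proof (cases "\<forall>i. S$i$i = 0")
    case True
    then show ?thesis using psd_zero[OF 0(1)] by simp
  next
    case False
    then obtain i where "S$i$i \<noteq> 0" by blast
    from psd_step[OF 0(1) this] 0(2) show ?thesis by auto
  qed
next
  case (Suc N)
  show ?case
  proof (cases "\<forall>i. S$i$i = 0")
    case True
    then have "S = 0" using psd_zero[OF Suc(2)] by simp
    then show ?thesis by (intro exI[of _ "\<lambda>_. 0"]) simp
  next
    case False
    then obtain i where "S$i$i \<noteq> 0" by blast
    from psd_step[OF Suc(2) this] obtain w where
      w: "psd (S - outer w)" "rank (S - outer w) < rank S" by blast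
    with Suc(3) have "rank (S - outer w) \<le> N" by simp
    from Suc(1)[OF w(1) this] obtain v where v: "S - outer w = (\<Sum>k<N. outer (v k))" by blast
    have "(\<Sum>k<Suc N. outer ((v(N := w)) k)) = (\<Sum>k<N. outer (v k)) + outer w"
      by (simp add: sum.lessThan_Suc)
    also have "\<dots> = S" unfolding v[symmetric] by simp
    finally show ?thesis by metis
  qed
qed

lemma outer_rot:
  fixes x y :: "complex^'n"
  shows "outer (cos t *\<^sub>R x + sin t *\<^sub>R y) + outer ((- sin t) *\<^sub>R x + cos t *\<^sub>R y)
         = outer x + outer y"
proof -
  have cs: "complex_of_real (cos t) ^ 2 + complex_of_real (sin t) ^ 2 = 1"
    by (metis of_real_add of_real_1 of_real_power sin_cos_squared_add2)
  show ?thesis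
    unfolding outer_def vec_eq_iff
    apply (simp add: vector_scaleR_component del: scaleR_conv_of_real)
    apply (simp add: scaleR_conv_of_real)
    apply (intro allI)
    using cs by algebra
qed

lemma norm_rot:
  fixes x y :: "'a::real_inner"
  shows "norm (cos t *\<^sub>R x + sin t *\<^sub>R y)^2 + norm ((- sin t) *\<^sub>R x + cos t *\<^sub>R y)^2
         = norm x ^2 + norm y ^2"
proof -
  have cs: "(cos t)^2 + (sin t)^2 = 1" by simp
  show ?thesis
    unfolding power2_norm_eq_inner
    apply (simp add: inner_add_left inner_add_right inner_diff_left inner_diff_right inner_commute[of y x])
    using cs by algebra
qed

lemma sum_two_change:
  fixes f g :: "'a \<Rightarrow> 'b::comm_monoid_add"
  assumes "finite A" "j \<in> A" "m \<in> A" "j \<noteq> m"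
    and "\<And>k. k \<in> A \<Longrightarrow> k \<noteq> j \<Longrightarrow> k \<noteq> m \<Longrightarrow> f k = g k"
    and "f j + f m = g j + g m"
  shows "sum f A = sum g A"
proof -
  have "sum f A = f j + (f m + sum f (A - {j} - {m}))"
    using assms(1-4) by (simp add: sum.remove[of A j] sum.remove[of "A - {j}" m])
  moreover have "sum g A = g j + (g m + sum g (A - {j} - {m}))"
    using assms(1-4) by (simp add: sum.remove[of A j] sum.remove[of "A - {j}" m])
  moreover have "sum f (A - {j} - {m}) = sum g (A - {j} - {m})"
    using assms(5) by (intro sum.cong) auto
  ultimately show ?thesis using assms(6) by (simp add: add.assoc[symmetric])
qed

lemma equalize:
  fixes v :: "nat \<Rightarrow> complex^'n"
  shows "(\<Sum>k<M. norm (v k)^2) = real M * c \<Longrightarrow>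
    \<exists>u. (\<forall>k<M. norm (u k)^2 = c) \<and> (\<Sum>k<M. outer (u k)) = (\<Sum>k<M. outer (v k))"
proof (induction M arbitrary: v)
  case 0
  then show ?case by auto
next
  case (Suc M)
  define y where "y = v M"
  show ?case
  proof (cases "norm y ^2 = c")
    case True
    have "(\<Sum>k<M. norm (v k)^2) = real M * c"
      using Suc(2) True by (simp add: y_def algebra_simps)
    from Suc(1)[OF this] obtain u where u: "\<forall>k<M. norm (u k)^2 = c"
      "(\<Sum>k<M. outer (u k)) = (\<Sum>k<M. outer (v k))" by blast
    show ?thesis
      by (rule exI[of _ "u(M := y)"]) (use u True in \<open>auto simp: y_def less_Suc_eq\<close>)
  next
    case False
    define d where "d = norm y ^2 - c"
    have d0: "d \<noteq> 0" using False d_def by simp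
    have "\<exists>j<M. (norm (v j)^2 - c) * d \<le> 0"
    proof (rule ccontr)
      assume "\<not> ?thesis"
      then have pos: "\<forall>j<M. (norm (v j)^2 - c) * d > 0" by (simp add: not_le)
      have "(\<Sum>k<Suc M. (norm (v k)^2 - c) * d) > 0"
      proof (rule sum_pos)
        show "finite {..<Suc M}" by simp
        show "{..<Suc M} \<noteq> {}" by auto
        show "\<And>i. i \<in> {..<Suc M} \<Longrightarrow> 0 < (norm (v i)^2 - c) * d"
          using pos d0 by (auto simp: less_Suc_eq d_def y_def) (auto simp: zero_less_mult_iff neq_iff)
      qed
      moreover have "(\<Sum>k<Suc M. (norm (v k)^2 - c) * d) = ((\<Sum>k<Suc M. norm (v k)^2) - real (Suc M) * c) * d"
        by (simp add: sum_distrib_right[symmetric] sum_subtractf)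
      ultimately show False using Suc(2) by simp
    qed
    then obtain j where j: "j < M" "(norm (v j)^2 - c) * d \<le> 0" by blast
    define x where "x = v j"
    define f where "f = (\<lambda>t. norm ((- sin t) *\<^sub>R x + cos t *\<^sub>R y)^2)"
    have cont: "\<forall>t. 0 \<le> t \<and> t \<le> pi/2 \<longrightarrow> isCont f t"
      unfolding f_def by (intro allI impI continuous_intros)
    have f0: "f 0 = norm y ^2" by (simp add: f_def)
    have f1: "f (pi/2) = norm x ^2" by (simp add: f_def)
    have "\<exists>t. 0 \<le> t \<and> t \<le> pi/2 \<and> f t = c"
    proof (cases "d > 0")
      case True
      then have "norm x ^2 \<le> c" using j(2) x_def by (simp add: mult_le_0_iff)
      then show ?thesis using IVT2[where f=f and a=0 and b="pi/2" and y=c] cont f0 f1 True d_def by simp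
    next
      case False
      then have "d < 0" using d0 by simp
      then have "norm x ^2 \<ge> c" using j(2) x_def by (simp add: mult_le_0_iff)
      then show ?thesis using IVT[where f=f and a=0 and b="pi/2" and y=c] cont f0 f1 \<open>d < 0\<close> d_def by simp
    qed
    then obtain t where ft: "f t = c" by blast
    define a where "a = cos t *\<^sub>R x + sin t *\<^sub>R y"
    define b where "b = (- sin t) *\<^sub>R x + cos t *\<^sub>R y"
    define w where "w = v(j := a, M := b)"
    have jM: "j \<noteq> M" using j by simp
    have nb: "norm b ^2 = c" using ft by (simp add: f_def b_def)
    have sw: "(\<Sum>k<Suc M. norm (w k)^2) = (\<Sum>k<Suc M. norm (v k)^2)"
      by (rule sum_two_change[where j=j and m=M])
        (use j jM norm_rot[of t x y] in \<open>auto simp: w_def a_def b_def x_def y_def\<close>)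
    have so: "(\<Sum>k<Suc M. outer (w k)) = (\<Sum>k<Suc M. outer (v k))"
      by (rule sum_two_change[where j=j and m=M])
        (use j jM outer_rot[of t x y] in \<open>auto simp: w_def a_def b_def x_def y_def\<close>)
    have wM: "w M = b" by (simp add: w_def)
    have "(\<Sum>k<M. norm (w k)^2) = real M * c"
      using sw Suc(2) nb wM by (simp add: algebra_simps)
    from Suc(1)[OF this] obtain u where u: "\<forall>k<M. norm (u k)^2 = c"
      "(\<Sum>k<M. outer (u k)) = (\<Sum>k<M. outer (w k))" by blast
    have "(\<Sum>k<Suc M. outer ((u(M := b)) k)) = (\<Sum>k<Suc M. outer (w k))"
      using u(2) wM by simp
    then show ?thesis using so u(1) nb
      by (intro exI[of _ "u(M := b)"]) (auto simp: less_Suc_eq)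
  qed
qed

lemma norm_sq_vec: "norm (v :: complex^'n) ^ 2 = (\<Sum>i\<in>UNIV. (cmod (v$i))^2)"
  by (simp add: norm_vec_def L2_set_def sum_nonneg)

lemma trace_outer: "trace (outer v) = complex_of_real (norm v ^ 2)"
  unfolding trace_def outer_def norm_sq_vec
  by (simp add: complex_mult_cnj cmod_power2)

lemma trace_sum: "trace (\<Sum>k\<in>A. B k) = (\<Sum>k\<in>A. trace (B k))"
  unfolding trace_def by (simp add: sum.swap[of _ A])

lemma outer_scale: "outer (r *\<^sub>R u) = (r^2) *\<^sub>R outer u"
  unfolding outer_def vec_eq_iff
  apply (simp add: vector_scaleR_component del: scaleR_conv_of_real)
  by (simp add: scaleR_conv_of_real power2_eq_square)

lemma norm_axis_c: "norm (axis i (1::complex)) = 1"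
proof -
  have "(\<Sum>j\<in>UNIV. (cmod (axis i (1::complex) $ j))^2) = 1"
    by (simp add: axis_def if_distrib[of "\<lambda>z. (cmod z)^2"] cong: if_cong)
  then have "norm (axis i (1::complex)) ^ 2 = 1" by (simp add: norm_sq_vec)
  then show ?thesis by (simp add: power2_eq_1_iff)
qed

theorem theorem5:
  fixes Sigma :: "complex^'n^'n" and M :: nat
  assumes "psd Sigma"
    and "M \<ge> rank Sigma"
  shows "\<exists>(t :: nat \<Rightarrow> complex^'n) (p :: nat \<Rightarrow> real).
           (\<forall>m\<in>{1..M}. norm (t m) = 1) \<and>
           Sigma = (\<Sum>m=1..M. p m *\<^sub>R outer (t m)) \<and>
           (\<forall>m\<in>{1..M}. complex_of_real (p m) = trace Sigma / of_nat M)"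
proof -
  obtain v where v: "Sigma = (\<Sum>k<M. outer (v k))"
    using psd_decomp[OF assms] by blast
  define s where "s = (\<Sum>k<M. norm (v k) ^ 2)"
  have tr: "trace Sigma = complex_of_real s"
    unfolding v trace_sum trace_outer s_def by simp
  show ?thesis
  proof (cases "M = 0")
    case True
    then show ?thesis using v by (intro exI[of _ "\<lambda>_. 0"]) simp
  next
    case Mpos: False
    show ?thesis
    proof (cases "s = 0")
      case True
      then have "\<forall>k\<in>{..<M}. norm (v k) ^ 2 = 0"
        unfolding s_def by (subst sum_nonneg_eq_0_iff[symmetric]) auto
      then have "Sigma = 0" unfolding v by simp
      then show ?thesis using True tr norm_axis_c
        by (intro exI[of _ "\<lambda>_. axis undefined 1"] exI[of _ "\<lambda>_. 0"]) simp
    next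
      case False
      have s0: "s \<ge> 0" unfolding s_def by (simp add: sum_nonneg)
      define c where "c = s / real M"
      have cpos: "c > 0" using False s0 Mpos by (simp add: c_def)
      have "(\<Sum>k<M. norm (v k)^2) = real M * c" using Mpos by (simp add: c_def s_def)
      from equalize[OF this] obtain u where u: "\<forall>k<M. norm (u k)^2 = c"
        "(\<Sum>k<M. outer (u k)) = (\<Sum>k<M. outer (v k))" by blast
      define t where "t = (\<lambda>m. (1 / sqrt c) *\<^sub>R u (m - 1))"
      have nu: "norm (u k) = sqrt c" if "k < M" for k
        using u(1) that by (metis norm_ge_zero real_sqrt_unique)
      have "\<forall>m\<in>{1..M}. norm (t m) = 1"
        using nu cpos by (auto simp: t_def)
      moreover have "(\<Sum>m=1..M. c *\<^sub>R outer (t m)) = Sigma"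
      proof -
        have "(\<Sum>m=1..M. c *\<^sub>R outer (t m)) = (\<Sum>m=1..M. outer (u (m - 1)))"
          using cpos by (intro sum.cong) (auto simp: t_def outer_scale power_divide)
        also have "\<dots> = (\<Sum>k<M. outer (u k))"
          using sum.atLeast1_atMost_eq[of "\<lambda>m. outer (u (m - 1))" M] by simp
        finally show ?thesis using u(2) v by simp
      qed
      moreover have "complex_of_real c = trace Sigma / of_nat M"
        using tr by (simp add: c_def)
      ultimately show ?thesis by (intro exI[of _ t] exI[of _ "\<lambda>_. c"]) auto
    qed
  qed
qed

end
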